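(* For $\beta>0$, $N\in\mathbb{N}$ and $k,s\in\mathbb{R}_+$, \[ \mathsf{M}^{(\beta)}_N(k;s)=\mathbb{E}_{\mathrm{C}\beta\mathrm{E}_N}\left[\left|\mathsf{X}_N(1)\right|^{2ks}\right] \mathbb{E}\left[\left(\frac{1}{2\pi}\int_{-\pi}^\pi \left|\mathfrak{q}_N^{\beta,ks}(\mathrm{e}^{\mathrm{i}\theta})\right|^{2s}\mathrm{d}\theta\right)^{k-1}\right]. \]
   Context: $\mathbb{R}_+=[0,\infty)$. C$\beta$E$_N$ is the probability measure on $[-\pi,\pi)^N$ with density proportional to $\prod_{1\le j<k\le N}|\mathrm{e}^{\mathrm{i}\theta_j}-\mathrm{e}^{\mathrm{i}\theta_k}|^\beta$; $\mathsf{X}_N(z)=\prod_{j=1}^N(1-z\mathrm{e}^{-\mathrm{i}\theta_j})$ with $(\theta_j)$ C$\beta$E$_N$-distributed; $\mathsf{M}^{(\beta)}_N(k;s)=\mathbb{E}_{\mathrm{C}\beta\mathrm{E}_N}\big[\big(\frac{1}{2\pi}\int_{-\pi}^{\pi}|\mathsf{X}_N(\mathrm{e}^{\mathrm{i}\theta})|^{2s}\mathrm{d}\theta\big)^k\big]$. For $\delta\ge 0$, $\mathcal{CJ}_{N,\beta,\delta}$ is the probability measure on $[-\pi,\pi)^N$ with density proportional to $\prod_{j<k}|\mathrm{e}^{\mathrm{i}\theta_j}-\mathrm{e}^{\mathrm{i}\theta_k}|^\beta\prod_{j}|1-\mathrm{e}^{\mathrm{i}\theta_j}|^{2\delta}$,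 and $\mathfrak{q}_N^{\beta,\delta}(z)=\prod_{j=1}^N\frac{z-\mathrm{e}^{\mathrm{i}\theta_j}}{1-\mathrm{e}^{\mathrm{i}\theta_j}}$ with $(\theta_j)\sim\mathcal{CJ}_{N,\beta,\delta}$. *)

theory Defs
  imports "HOL-Probability.Probability"
begin

text \<open>Points of the ensembles: \<theta> :: nat \<Rightarrow> real, only coordinates j < N matter.
  The reference measure is Lebesgue measure on [-pi,pi)^N.\<close>

definition box_space :: "nat \<Rightarrow> (nat \<Rightarrow> real) measure" where
  "box_space N = PiM {..<N} (\<lambda>_. restrict_space lborel {-pi..<pi})"

definition ens_expect :: "nat \<Rightarrow> ((nat \<Rightarrow> real) \<Rightarrow> real) \<Rightarrow> ((nat \<Rightarrow> real) \<Rightarrow> real) \<Rightarrow> ennreal" where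
  "ens_expect N w f =
     (\<integral>\<^sup>+ \<theta>. ennreal (f \<theta>) * ennreal (w \<theta>) \<partial>box_space N) / (\<integral>\<^sup>+ \<theta>. ennreal (w \<theta>) \<partial>box_space N)"

definition cbe_weight :: "real \<Rightarrow> nat \<Rightarrow> (nat \<Rightarrow> real) \<Rightarrow> real" where
  "cbe_weight \<beta> N \<theta> =
     (\<Prod>p\<in>{(j,k). j < k \<and> k < N}. cmod (cis (\<theta> (fst p)) - cis (\<theta> (snd p))) powr \<beta>)"

definition cj_weight :: "real \<Rightarrow> real \<Rightarrow> nat \<Rightarrow> (nat \<Rightarrow> real) \<Rightarrow> real" where
  "cj_weight \<beta> \<delta> N \<theta> = cbe_weight \<beta> N \<theta> * (\<Prod>j<N. cmod (1 - cis (\<theta> j)) powr (2 * \<delta>))"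

definition charpoly_X :: "nat \<Rightarrow> (nat \<Rightarrow> real) \<Rightarrow> complex \<Rightarrow> complex" where
  "charpoly_X N \<theta> z = (\<Prod>j<N. 1 - z * cis (- \<theta> j))"

definition q_poly :: "nat \<Rightarrow> (nat \<Rightarrow> real) \<Rightarrow> complex \<Rightarrow> complex" where
  "q_poly N \<theta> z = (\<Prod>j<N. (z - cis (\<theta> j)) / (1 - cis (\<theta> j)))"

definition moments_M :: "real \<Rightarrow> nat \<Rightarrow> real \<Rightarrow> real \<Rightarrow> ennreal" where
  "moments_M \<beta> N k s = ens_expect N (cbe_weight \<beta> N)
     (\<lambda>\<theta>. (1 / (2 * pi) * (LBINT t=-pi..pi. cmod (charpoly_X N \<theta> (cis t)) powr (2 * s))) powr k)"

end

theory Submission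
  imports Defs
begin

definition wrap :: "real \<Rightarrow> real" where
  "wrap y = y - 2 * pi * of_int \<lfloor>(y + pi) / (2 * pi)\<rfloor>"

definition M0 :: "real measure" where "M0 = restrict_space lborel {-pi..<pi}"

lemma wrap_range: "wrap y \<in> {-pi..<pi}"
proof -
  let ?z = "(y + pi) / (2 * pi)"
  have a: "of_int \<lfloor>?z\<rfloor> \<le> ?z" "?z < of_int \<lfloor>?z\<rfloor> + 1" by linarith+
  have e: "2 * pi * ?z = y + pi" by simp
  have "2 * pi * of_int \<lfloor>?z\<rfloor> \<le> 2 * pi * ?z"
    using a(1) by (intro mult_left_mono) auto
  moreover have "2 * pi * ?z < 2 * pi * (of_int \<lfloor>?z\<rfloor> + 1)"
    using a(2) by (intro mult_strict_left_mono) auto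
  ultimately show ?thesis unfolding wrap_def e by (auto simp: algebra_simps)
qed

lemma wrap_ge[simp]: "-pi \<le> wrap y" using wrap_range[of y] by simp
lemma wrap_lt[simp]: "wrap y < pi" using wrap_range[of y] by simp

lemma wrap_id: "y \<in> {-pi..<pi} \<Longrightarrow> wrap y = y"
proof -
  assume y: "y \<in> {-pi..<pi}"
  have "\<lfloor>(y + pi) / (2 * pi)\<rfloor> = 0"
    using y by (subst floor_eq_iff) (auto simp: field_simps)
  then show ?thesis by (simp add: wrap_def)
qed

lemma wrap_periodic: "wrap (y + 2 * pi) = wrap y"
proof -
  have "(y + 2 * pi + pi) / (2 * pi) = (y + pi) / (2 * pi) + 1" by (simp add: field_simps)
  then show ?thesis unfolding wrap_def by (simp add: algebra_simps)
qed

lemma cis_wrap: "cis (wrap y) = cis y"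
proof -
  have "wrap y = y + 2 * pi * of_int (- \<lfloor>(y + pi) / (2 * pi)\<rfloor>)"
    unfolding wrap_def by simp
  then have "cis (wrap y) = cis y * cis (2 * pi * of_int (- \<lfloor>(y + pi) / (2 * pi)\<rfloor>))"
    by (simp add: cis_mult)
  also have "cis (2 * pi * of_int (- \<lfloor>(y + pi) / (2 * pi)\<rfloor>)) = 1"
    by (rule cis_multiple_2pi) (rule Ints_of_int)
  finally show ?thesis by simp
qed

lemma wrap_measurable[measurable]: "wrap \<in> borel_measurable borel"
  unfolding wrap_def by measurable

lemma space_M0: "space M0 = {-pi..<pi}" by (simp add: M0_def)
lemma sets_M0_iff: "A \<in> sets M0 \<longleftrightarrow> A \<in> sets borel \<and> A \<subseteq> {-pi..<pi}"
  unfolding M0_def by (auto simp: sets_restrict_space_iff)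

lemma finite_measure_M0: "finite_measure M0"
  unfolding M0_def
proof (rule finite_measureI)
  show "emeasure (restrict_space lborel {- pi..<pi}) (space (restrict_space lborel {- pi..<pi})) \<noteq> \<infinity>"
    by (simp add: emeasure_restrict_space)
qed

lemma emeasure_M0_space: "emeasure M0 (space M0) = ennreal (2 * pi)"
  unfolding M0_def by (simp add: emeasure_restrict_space)

lemma nn_integral_M0: "f \<in> borel_measurable borel \<Longrightarrow>
   (\<integral>\<^sup>+x. f x \<partial>M0) = (\<integral>\<^sup>+x. f x * indicator {-pi..<pi} x \<partial>lborel)"
  unfolding M0_def by (subst nn_integral_restrict_space) auto

lemma periodic_shift_aux:
  fixes g :: "real \<Rightarrow> ennreal"
  assumes g[measurable]: "g \<in> borel_measurable borel" and per: "\<And>x. g (x + 2 * pi) = g x"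
  assumes ab: "a \<le> b" "b \<le> a + 2 * pi"
  shows "(\<integral>\<^sup>+x. g x * indicator {a..<a + 2*pi} x \<partial>lborel) = (\<integral>\<^sup>+x. g x * indicator {b..<b + 2*pi} x \<partial>lborel)"
proof -
  have s1: "\<And>x. g x * indicator {a..<a + 2*pi} x = g x * indicator {a..<b} x + g x * indicator {b..<a+2*pi} x"
    using ab by (auto simp: indicator_def)
  have s2: "\<And>x. g x * indicator {b..<b + 2*pi} x = g x * indicator {b..<a+2*pi} x + g x * indicator {a+2*pi..<b+2*pi} x"
    using ab by (auto simp: indicator_def)
  have tr: "(\<integral>\<^sup>+x. g x * indicator {a+2*pi..<b+2*pi} x \<partial>lborel) = (\<integral>\<^sup>+x. g x * indicator {a..<b} x \<partial>lborel)"
  proof -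
    have "(\<integral>\<^sup>+x. g x * indicator {a+2*pi..<b+2*pi} x \<partial>lborel)
        = ennreal \<bar>1\<bar> * (\<integral>\<^sup>+x. g (2*pi + 1 * x) * indicator {a+2*pi..<b+2*pi} (2*pi + 1*x) \<partial>lborel)"
      by (rule nn_integral_real_affine) auto
    also have "\<dots> = (\<integral>\<^sup>+x. g x * indicator {a..<b} x \<partial>lborel)"
      apply (simp only: abs_one ennreal_1 mult_1 mult_1_left)
      using per by (intro nn_integral_cong) (auto simp: indicator_def add.commute)
    finally show ?thesis .
  qed
  show ?thesis
    unfolding s1 s2 by (subst nn_integral_add, simp, simp)+ (simp add: tr add.commute)
qed

lemma periodic_shift:
  fixes g :: "real \<Rightarrow> ennreal"
  assumes g[measurable]: "g \<in> borel_measurable borel" and per: "\<And>x. g (x + 2 * pi) = g x"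
  assumes c: "\<bar>c\<bar> \<le> 2 * pi"
  shows "(\<integral>\<^sup>+x. g (x + c) * indicator {-pi..<pi} x \<partial>lborel) = (\<integral>\<^sup>+x. g x * indicator {-pi..<pi} x \<partial>lborel)"
proof -
  have "(\<integral>\<^sup>+x. g x * indicator {-pi+c..<-pi+c + 2*pi} x \<partial>lborel)
      = ennreal \<bar>1\<bar> * (\<integral>\<^sup>+x. g (c + 1 * x) * indicator {-pi+c..<-pi+c + 2*pi} (c + 1*x) \<partial>lborel)"
    by (rule nn_integral_real_affine) auto
  also have "\<dots> = (\<integral>\<^sup>+x. g (x + c) * indicator {-pi..<pi} x \<partial>lborel)"
    apply (simp only: abs_one ennreal_1 mult_1 mult_1_left)
    by (intro nn_integral_cong) (auto simp: indicator_def add.commute)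
  finally have e1: "(\<integral>\<^sup>+x. g (x + c) * indicator {-pi..<pi} x \<partial>lborel) = (\<integral>\<^sup>+x. g x * indicator {-pi+c..<-pi+c + 2*pi} x \<partial>lborel)" ..
  have e2: "(\<integral>\<^sup>+x. g x * indicator {-pi..<-pi + 2*pi} x \<partial>lborel) = (\<integral>\<^sup>+x. g x * indicator {-pi+c..<-pi+c + 2*pi} x \<partial>lborel)"
  proof (cases "c \<ge> 0")
    case True then show ?thesis using c by (intro periodic_shift_aux[OF g per]) auto
  next
    case False then show ?thesis using c by (intro periodic_shift_aux[OF g per, symmetric]) auto
  qed
  show ?thesis using e1 e2 by simp
qed

definition rot :: "real \<Rightarrow> real \<Rightarrow> real" where "rot c x = wrap (x + c)"

lemma rot_borel[measurable]: "rot c \<in> borel_measurable borel"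
  unfolding rot_def by measurable

lemma rot_measurable_M0[measurable]: "rot c \<in> M0 \<rightarrow>\<^sub>M M0"
  unfolding M0_def
  by (rule measurable_restrict_space3) (auto simp: rot_def)

lemma nn_integral_M0_rot:
  assumes f[measurable]: "f \<in> borel_measurable M0" and c: "\<bar>c\<bar> \<le> 2 * pi"
  shows "(\<integral>\<^sup>+x. f (rot c x) \<partial>M0) = (\<integral>\<^sup>+x. f x \<partial>M0)"
proof -
  have wM0[measurable]: "wrap \<in> borel \<rightarrow>\<^sub>M M0"
    unfolding M0_def by (rule measurable_restrict_space2) (auto simp: wrap_range)
  define g where "g = (\<lambda>y. f (wrap y))"
  have g[measurable]: "g \<in> borel_measurable borel" unfolding g_def by measurable
  have per: "g (x + 2*pi) = g x" for x by (simp add: g_def wrap_periodic)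
  have "(\<integral>\<^sup>+x. f (rot c x) \<partial>M0) = (\<integral>\<^sup>+x. g (x + c) * indicator {-pi..<pi} x \<partial>lborel)"
    unfolding M0_def
    by (subst nn_integral_restrict_space) (auto simp: g_def rot_def)
  also have "\<dots> = (\<integral>\<^sup>+x. g x * indicator {-pi..<pi} x \<partial>lborel)"
    by (rule periodic_shift[OF g per c])
  also have "\<dots> = (\<integral>\<^sup>+x. f x * indicator {-pi..<pi} x \<partial>lborel)"
    by (intro nn_integral_cong) (auto simp: g_def indicator_def wrap_id)
  also have "\<dots> = (\<integral>\<^sup>+x. f x \<partial>M0)"
    unfolding M0_def by (subst nn_integral_restrict_space) auto
  finally show ?thesis .
qed

lemma distr_M0_rot:
  assumes c: "\<bar>c\<bar> \<le> 2 * pi"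
  shows "distr M0 M0 (rot c) = M0"
proof (rule measure_eqI)
  fix A assume A: "A \<in> sets (distr M0 M0 (rot c))"
  then have A': "A \<in> sets M0" by simp
  have "emeasure (distr M0 M0 (rot c)) A = (\<integral>\<^sup>+x. indicator A x \<partial>distr M0 M0 (rot c))"
    using A by simp
  also have "\<dots> = (\<integral>\<^sup>+x. indicator A (rot c x) \<partial>M0)"
    using A' by (intro nn_integral_distr) auto
  also have "\<dots> = (\<integral>\<^sup>+x. indicator A x \<partial>M0)"
    using A' by (intro nn_integral_M0_rot c) auto
  also have "\<dots> = emeasure M0 A" using A' by simp
  finally show "emeasure (distr M0 M0 (rot c)) A = emeasure M0 A" .
qed simp

lemma sigma_finite_M0: "sigma_finite_measure M0"
proof -
  interpret finite_measure M0 by (rule finite_measure_M0)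
  show ?thesis by unfold_locales
qed

lemma box_space_M0: "box_space N = PiM {..<N} (\<lambda>_. M0)"
  unfolding box_space_def M0_def ..

interpretation PS: product_sigma_finite "\<lambda>_::nat. M0"
  unfolding product_sigma_finite_def using sigma_finite_M0 by simp

definition Rot :: "nat \<Rightarrow> real \<Rightarrow> (nat \<Rightarrow> real) \<Rightarrow> (nat \<Rightarrow> real)" where
  "Rot N c \<theta> = (\<lambda>j\<in>{..<N}. rot c (\<theta> j))"

lemma Rot_measurable[measurable]: "Rot N c \<in> box_space N \<rightarrow>\<^sub>M box_space N"
  unfolding Rot_def box_space_M0 by measurable

lemma distr_box_Rot:
  assumes c: "\<bar>c\<bar> \<le> 2 * pi"
  shows "distr (box_space N) (box_space N) (Rot N c) = box_space N"
  unfolding box_space_M0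
proof (rule PS.PiM_eqI)
  show "sets (distr (Pi\<^sub>M {..<N} (\<lambda>_. M0)) (Pi\<^sub>M {..<N} (\<lambda>_. M0)) (Rot N c)) = sets (Pi\<^sub>M {..<N} (\<lambda>_. M0))"
    by simp
  fix A assume A: "\<And>i. i \<in> {..<N} \<Longrightarrow> A i \<in> sets M0"
  have "emeasure (distr (Pi\<^sub>M {..<N} (\<lambda>_. M0)) (Pi\<^sub>M {..<N} (\<lambda>_. M0)) (Rot N c)) (Pi\<^sub>E {..<N} A)
      = emeasure (Pi\<^sub>M {..<N} (\<lambda>_. M0)) (Rot N c -` Pi\<^sub>E {..<N} A \<inter> space (Pi\<^sub>M {..<N} (\<lambda>_. M0)))"
  proof (rule emeasure_distr)
    show "Rot N c \<in> Pi\<^sub>M {..<N} (\<lambda>_. M0) \<rightarrow>\<^sub>M Pi\<^sub>M {..<N} (\<lambda>_. M0)"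
      using Rot_measurable[of N c] unfolding box_space_M0 .
    show "Pi\<^sub>E {..<N} A \<in> sets (Pi\<^sub>M {..<N} (\<lambda>_. M0))"
      using A by (intro sets_PiM_I_finite) auto
  qed
  also have "Rot N c -` Pi\<^sub>E {..<N} A \<inter> space (Pi\<^sub>M {..<N} (\<lambda>_. M0)) = Pi\<^sub>E {..<N} (\<lambda>i. rot c -` A i \<inter> space M0)"
    using A by (auto simp: space_PiM PiE_def Pi_def extensional_def Rot_def space_M0 rot_def)
  also have "emeasure (Pi\<^sub>M {..<N} (\<lambda>_. M0)) (Pi\<^sub>E {..<N} (\<lambda>i. rot c -` A i \<inter> space M0)) =
          (\<Prod>i\<in>{..<N}. emeasure M0 (rot c -` A i \<inter> space M0))"
    using A by (intro PS.emeasure_PiM) auto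
  also have "\<dots> = (\<Prod>i\<in>{..<N}. emeasure M0 (A i))"
  proof (intro prod.cong refl)
    fix i assume i: "i \<in> {..<N}"
    have "emeasure M0 (A i) = emeasure (distr M0 M0 (rot c)) (A i)" using distr_M0_rot[OF c] by simp
    also have "\<dots> = emeasure M0 (rot c -` A i \<inter> space M0)"
      using A[OF i] by (intro emeasure_distr) auto
    finally show "emeasure M0 (rot c -` A i \<inter> space M0) = emeasure M0 (A i)" ..
  qed
  finally show "emeasure (distr (Pi\<^sub>M {..<N} (\<lambda>_. M0)) (Pi\<^sub>M {..<N} (\<lambda>_. M0)) (Rot N c)) (Pi\<^sub>E {..<N} A) = (\<Prod>i\<in>{..<N}. emeasure M0 (A i))" .
qed simp

lemma nn_integral_box_Rot:
  assumes f[measurable]: "f \<in> borel_measurable (box_space N)" and c: "\<bar>c\<bar> \<le> 2 * pi"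
  shows "(\<integral>\<^sup>+\<theta>. f (Rot N c \<theta>) \<partial>box_space N) = (\<integral>\<^sup>+\<theta>. f \<theta> \<partial>box_space N)"
proof -
  have "(\<integral>\<^sup>+\<theta>. f \<theta> \<partial>box_space N) = (\<integral>\<^sup>+\<theta>. f \<theta> \<partial>distr (box_space N) (box_space N) (Rot N c))"
    using distr_box_Rot[OF c] by simp
  also have "\<dots> = (\<integral>\<^sup>+\<theta>. f (Rot N c \<theta>) \<partial>box_space N)"
    by (intro nn_integral_distr) auto
  finally show ?thesis ..
qed

lemma cis_rot: "cis (rot c x) = cis (x + c)"
  by (simp add: rot_def cis_wrap)

lemma cis_borel[measurable]: "cis \<in> borel_measurable borel"
  by (intro borel_measurable_continuous_onI continuous_intros)

lemma M0_id_borel: "(\<lambda>x. x) \<in> M0 \<rightarrow>\<^sub>M borel"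
  unfolding M0_def by (rule measurable_restrict_space1) (simp add: measurable_ident_sets)

lemma comp_box[measurable]: "j \<in> {..<N} \<Longrightarrow> (\<lambda>\<theta>. \<theta> j) \<in> borel_measurable (box_space N)"
proof -
  assume j: "j \<in> {..<N}"
  have "(\<lambda>\<theta>. \<theta> j) \<in> box_space N \<rightarrow>\<^sub>M M0" unfolding box_space_M0
    using j by (rule measurable_component_singleton)
  from measurable_comp[OF this M0_id_borel] show ?thesis by (simp add: comp_def)
qed

lemma fst_box[measurable]: "j \<in> {..<N} \<Longrightarrow> (\<lambda>x. fst x j) \<in> borel_measurable (box_space N \<Otimes>\<^sub>M M)"
  using measurable_comp[OF measurable_fst comp_box[of j N]] by (simp add: comp_def)

lemma snd_M0[measurable]: "(\<lambda>x. snd x) \<in> borel_measurable (M \<Otimes>\<^sub>M M0)"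
  using measurable_comp[OF measurable_snd M0_id_borel] by (simp add: comp_def)

lemma charpoly_meas[measurable]:
  "(\<lambda>x. cmod (charpoly_X N (fst x) (cis (snd x))) powr (2 * s)) \<in> borel_measurable (box_space N \<Otimes>\<^sub>M M0)"
  unfolding charpoly_X_def by measurable

lemma charpoly1_meas[measurable]:
  "(\<lambda>x. cmod (charpoly_X N x 1) powr (2 * s)) \<in> borel_measurable (box_space N)"
  unfolding charpoly_X_def by measurable

lemma cbe_meas[measurable]:
  "cbe_weight \<beta> N \<in> borel_measurable (box_space N)"
  unfolding cbe_weight_def
proof (intro borel_measurable_prod)
  fix p assume "p \<in> {(j, k). j < k \<and> k < N}"
  then have "fst p \<in> {..<N}" "snd p \<in> {..<N}" by auto
  note [measurable] = comp_box[OF this(1)] comp_box[OF this(2)]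
  show "(\<lambda>x. cmod (cis (x (fst p)) - cis (x (snd p))) powr \<beta>)
         \<in> borel_measurable (box_space N)"
    by measurable
qed

lemma cj_meas[measurable]:
  "cj_weight \<beta> d N \<in> borel_measurable (box_space N)"
  unfolding cj_weight_def by measurable

definition Aa :: "nat \<Rightarrow> real \<Rightarrow> (nat \<Rightarrow> real) \<Rightarrow> real \<Rightarrow> real" where
  "Aa N s \<theta> u = cmod (charpoly_X N \<theta> (cis u)) powr (2 * s)"

definition Ie :: "nat \<Rightarrow> real \<Rightarrow> (nat \<Rightarrow> real) \<Rightarrow> ennreal" where
  "Ie N s \<theta> = (\<integral>\<^sup>+u. ennreal (Aa N s \<theta> u) \<partial>M0)"

lemma Aa_borel[measurable]: "Aa N s \<theta> \<in> borel_measurable borel"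
  unfolding Aa_def charpoly_X_def by measurable

lemma Aa_nonneg: "0 \<le> Aa N s \<theta> u" by (simp add: Aa_def)

lemma cmod_charpoly_le: "cmod (charpoly_X N \<theta> (cis u)) \<le> 2 ^ N"
proof -
  have "cmod (charpoly_X N \<theta> (cis u)) = (\<Prod>j<N. cmod (1 - cis u * cis (- \<theta> j)))"
    unfolding charpoly_X_def by (simp add: prod_norm)
  also have "\<dots> \<le> (\<Prod>j<N. 2)"
  proof (intro prod_mono conjI)
    fix j
    have "cmod (1 - cis u * cis (- \<theta> j)) \<le> cmod 1 + cmod (cis u * cis (- \<theta> j))"
      by (rule norm_triangle_ineq4)
    also have "\<dots> = 2" by (simp add: norm_mult)
    finally show "cmod (1 - cis u * cis (- \<theta> j)) \<le> 2" .
  qed simp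
  finally show ?thesis by simp
qed

lemma Aa_le: "s \<ge> 0 \<Longrightarrow> Aa N s \<theta> u \<le> (2 ^ N) powr (2 * s)"
  unfolding Aa_def by (intro powr_mono2 cmod_charpoly_le) auto

lemma Ie_finite: "s \<ge> 0 \<Longrightarrow> Ie N s \<theta> < \<infinity>"
proof -
  assume s: "s \<ge> 0"
  have "Ie N s \<theta> \<le> (\<integral>\<^sup>+u. ennreal ((2 ^ N) powr (2 * s)) \<partial>M0)"
    unfolding Ie_def by (intro nn_integral_mono ennreal_leI Aa_le s)
  also have "\<dots> = ennreal ((2 ^ N) powr (2 * s)) * ennreal (2 * pi)"
    by (simp add: emeasure_M0_space)
  also have "\<dots> < \<infinity>" by (simp add: ennreal_mult_less_top)
  finally show ?thesis .
qed

lemma LBINT_eq_Ie: "(LBINT t=-pi..pi. Aa N s \<theta> t) = enn2real (Ie N s \<theta>)"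
proof -
  have "(LBINT t=-pi..pi. Aa N s \<theta> t) = (LINT t|lborel. indicator {-pi<..<pi} t *\<^sub>R Aa N s \<theta> t)"
    by (simp add: interval_lebesgue_integral_def set_lebesgue_integral_def)
  also have "\<dots> = enn2real (\<integral>\<^sup>+t. ennreal (indicator {-pi<..<pi} t *\<^sub>R Aa N s \<theta> t) \<partial>lborel)"
    by (rule integral_eq_nn_integral) (auto simp: Aa_nonneg)
  also have "(\<integral>\<^sup>+t. ennreal (indicator {-pi<..<pi} t *\<^sub>R Aa N s \<theta> t) \<partial>lborel)
      = (\<integral>\<^sup>+t. ennreal (Aa N s \<theta> t) * indicator {-pi..<pi} t \<partial>lborel)"
    using AE_lborel_singleton[of "-pi"]
    by (intro nn_integral_cong_AE) (auto elim!: eventually_mono simp: indicator_def)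
  also have "\<dots> = Ie N s \<theta>"
    unfolding Ie_def by (rule nn_integral_M0[symmetric]) simp
  finally show ?thesis .
qed

lemma Aa_pair_meas[measurable]: "(\<lambda>(\<theta>, u). ennreal (Aa N s \<theta> u)) \<in> borel_measurable (box_space N \<Otimes>\<^sub>M M0)"
proof -
  have "(\<lambda>x. ennreal (cmod (charpoly_X N (fst x) (cis (snd x))) powr (2 * s))) \<in> borel_measurable (box_space N \<Otimes>\<^sub>M M0)"
    by measurable
  then show ?thesis by (simp add: Aa_def case_prod_beta')
qed

lemma Ie_meas[measurable]: "Ie N s \<in> borel_measurable (box_space N)"
  unfolding Ie_def
  by (rule sigma_finite_measure.borel_measurable_nn_integral[OF sigma_finite_M0]) (rule Aa_pair_meas)

lemma charpoly_Rot: "charpoly_X N (Rot N c \<theta>) (cis u) = charpoly_X N \<theta> (cis (u - c))"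
  unfolding charpoly_X_def
proof (intro prod.cong refl)
  fix j assume "j \<in> {..<N}"
  then have "Rot N c \<theta> j = rot c (\<theta> j)" by (simp add: Rot_def)
  then have "cis (- Rot N c \<theta> j) = cis (- (\<theta> j + c))"
    by (metis cis_rot cis_inverse)
  then show "1 - cis u * cis (- Rot N c \<theta> j) = 1 - cis (u - c) * cis (- \<theta> j)"
    by (simp add: cis_mult algebra_simps)
qed

lemma Aa_Rot: "Aa N s (Rot N c \<theta>) u = Aa N s \<theta> (rot (-c) u)"
  unfolding Aa_def charpoly_Rot by (simp add: cis_rot)

lemma Ie_Rot: "\<bar>c\<bar> \<le> 2 * pi \<Longrightarrow> Ie N s (Rot N c \<theta>) = Ie N s \<theta>"
  unfolding Ie_def Aa_Rot
proof (rule nn_integral_M0_rot)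
  show "(\<lambda>x. ennreal (Aa N s \<theta> x)) \<in> borel_measurable M0"
    using measurable_comp[OF M0_id_borel Aa_borel] by (simp add: comp_def)
qed auto

lemma cbe_Rot: "cbe_weight \<beta> N (Rot N c \<theta>) = cbe_weight \<beta> N \<theta>"
  unfolding cbe_weight_def
proof (intro prod.cong refl)
  fix p assume "p \<in> {(j, k). j < k \<and> k < N}"
  then have "fst p < N" "snd p < N" by auto
  then have e: "cis (Rot N c \<theta> (fst p)) - cis (Rot N c \<theta> (snd p)) = cis c * (cis (\<theta> (fst p)) - cis (\<theta> (snd p)))"
    by (simp add: Rot_def cis_rot algebra_simps cis_mult[symmetric])
  show "cmod (cis (Rot N c \<theta> (fst p)) - cis (Rot N c \<theta> (snd p))) powr \<beta> = cmod (cis (\<theta> (fst p)) - cis (\<theta> (snd p))) powr \<beta>"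
    unfolding e by (simp add: norm_mult)
qed

lemma charpoly1_Rot: "charpoly_X N (Rot N u \<theta>) (cis u) = charpoly_X N \<theta> 1"
  by (simp add: charpoly_Rot)

definition Ir :: "nat \<Rightarrow> real \<Rightarrow> (nat \<Rightarrow> real) \<Rightarrow> real" where
  "Ir N s \<theta> = 1 / (2 * pi) * enn2real (Ie N s \<theta>)"

lemma Ir_meas[measurable]: "Ir N s \<in> borel_measurable (box_space N)"
  unfolding Ir_def by measurable

lemma Ir_nonneg: "0 \<le> Ir N s \<theta>" by (simp add: Ir_def)

lemma ennreal_Ir: "s \<ge> 0 \<Longrightarrow> ennreal (Ir N s \<theta>) = ennreal (1 / (2 * pi)) * Ie N s \<theta>"
  unfolding Ir_def using Ie_finite[of s N \<theta>]
  by (subst ennreal_mult) (auto simp: ennreal_enn2real)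

lemma Ir_Rot: "\<bar>c\<bar> \<le> 2 * pi \<Longrightarrow> Ir N s (Rot N c \<theta>) = Ir N s \<theta>"
  by (simp add: Ir_def Ie_Rot)

lemma cbe_nonneg: "0 \<le> cbe_weight \<beta> N \<theta>"
  unfolding cbe_weight_def by (intro prod_nonneg) auto

lemma powr_split: "(x::real) \<ge> 0 \<Longrightarrow> x powr k = x * x powr (k - 1)"
proof (cases "x = 0")
  case False
  assume "x \<ge> 0"
  then have "x > 0" using False by simp
  have "x powr (1 + (k - 1)) = x powr 1 * x powr (k - 1)" by (rule powr_add)
  moreover have "x powr k = x powr (1 + (k - 1))" by simp
  ultimately show ?thesis using \<open>x > 0\<close> by (simp only: powr_one_gt_zero_iff powr_one)
qed simp

definition Fw :: "real \<Rightarrow> nat \<Rightarrow> real \<Rightarrow> real \<Rightarrow> (nat \<Rightarrow> real) \<Rightarrow> real" where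
  "Fw \<beta> N k s \<theta> = Ir N s \<theta> powr (k - 1) * cbe_weight \<beta> N \<theta>"

lemma Fw_meas[measurable]: "Fw \<beta> N k s \<in> borel_measurable (box_space N)"
  unfolding Fw_def by measurable

lemma Fw_nonneg: "0 \<le> Fw \<beta> N k s \<theta>" unfolding Fw_def by (simp add: cbe_nonneg)

lemma Fw_Rot: "\<bar>c\<bar> \<le> 2 * pi \<Longrightarrow> Fw \<beta> N k s (Rot N c \<theta>) = Fw \<beta> N k s \<theta>"
  by (simp add: Fw_def Ir_Rot cbe_Rot)

lemma pair_sf: "pair_sigma_finite (box_space N) M0"
  unfolding pair_sigma_finite_def box_space_M0 using PS.sigma_finite[of "{..<N}"] sigma_finite_M0 by simp

lemma main_identity:
  assumes s: "s \<ge> 0"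
  shows "(\<integral>\<^sup>+\<theta>. ennreal (Ir N s \<theta> powr k) * ennreal (cbe_weight \<beta> N \<theta>) \<partial>box_space N)
       = (\<integral>\<^sup>+\<theta>. ennreal (cmod (charpoly_X N \<theta> 1) powr (2 * s)) * ennreal (Fw \<beta> N k s \<theta>) \<partial>box_space N)"
    (is "?L = ?R")
proof -
  let ?P = "box_space N"
  let ?F = "Fw \<beta> N k s"
  let ?G = "\<lambda>\<theta> u. ennreal (Aa N s \<theta> u) * ennreal (?F \<theta>)"
  have G_meas: "(\<lambda>(\<theta>, u). ?G \<theta> u) \<in> borel_measurable (?P \<Otimes>\<^sub>M M0)"
  proof -
    have "(\<lambda>x. (\<lambda>(\<theta>, u). ennreal (Aa N s \<theta> u)) x * ennreal (?F (fst x))) \<in> borel_measurable (?P \<Otimes>\<^sub>M M0)"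
      by measurable
    then show ?thesis by (simp add: case_prod_beta')
  qed
  have "?L = (\<integral>\<^sup>+\<theta>. ennreal (Ir N s \<theta>) * ennreal (?F \<theta>) \<partial>?P)"
  proof (intro nn_integral_cong)
    fix \<theta>
    have "Ir N s \<theta> powr k * cbe_weight \<beta> N \<theta> = Ir N s \<theta> * ?F \<theta>"
      by (subst powr_split[OF Ir_nonneg]) (simp add: Fw_def)
    then show "ennreal (Ir N s \<theta> powr k) * ennreal (cbe_weight \<beta> N \<theta>) = ennreal (Ir N s \<theta>) * ennreal (?F \<theta>)"
      by (simp add: ennreal_mult'[symmetric] Ir_nonneg Fw_nonneg cbe_nonneg)
  qed
  also have "\<dots> = (\<integral>\<^sup>+\<theta>. ennreal (1 / (2 * pi)) * (Ie N s \<theta> * ennreal (?F \<theta>)) \<partial>?P)"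
    by (simp add: ennreal_Ir[OF s] mult.assoc)
  also have "\<dots> = ennreal (1 / (2 * pi)) * (\<integral>\<^sup>+\<theta>. Ie N s \<theta> * ennreal (?F \<theta>) \<partial>?P)"
    by (rule nn_integral_cmult) measurable
  also have "(\<integral>\<^sup>+\<theta>. Ie N s \<theta> * ennreal (?F \<theta>) \<partial>?P) = (\<integral>\<^sup>+\<theta>. (\<integral>\<^sup>+u. ?G \<theta> u \<partial>M0) \<partial>?P)"
    unfolding Ie_def
    by (intro nn_integral_cong nn_integral_multc[symmetric]) (use measurable_comp[OF M0_id_borel Aa_borel] in \<open>simp add: comp_def\<close>)
  also have "\<dots> = (\<integral>\<^sup>+u. (\<integral>\<^sup>+\<theta>. ?G \<theta> u \<partial>?P) \<partial>M0)"
    by (rule pair_sigma_finite.Fubini'[OF pair_sf G_meas, symmetric])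
  also have "\<dots> = (\<integral>\<^sup>+u. ?R \<partial>M0)"
  proof (rule nn_integral_cong)
    fix u assume u: "u \<in> space M0"
    then have c: "\<bar>u\<bar> \<le> 2 * pi" using pi_gt_zero by (auto simp: space_M0)
    have Gm: "(\<lambda>\<theta>. ?G \<theta> u) \<in> borel_measurable ?P"
    proof -
      have "(\<lambda>\<theta>. (\<theta>, u)) \<in> ?P \<rightarrow>\<^sub>M ?P \<Otimes>\<^sub>M M0" using u by measurable
      from measurable_comp[OF this G_meas] show ?thesis by (simp add: comp_def)
    qed
    have "(\<integral>\<^sup>+\<theta>. ?G \<theta> u \<partial>?P) = (\<integral>\<^sup>+\<theta>. ?G (Rot N u \<theta>) u \<partial>?P)"
      by (rule nn_integral_box_Rot[OF Gm c, symmetric])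
    also have "\<dots> = ?R"
      by (intro nn_integral_cong) (simp add: Fw_Rot[OF c] Aa_def charpoly1_Rot)
    finally show "(\<integral>\<^sup>+\<theta>. ?G \<theta> u \<partial>?P) = ?R" .
  qed
  also have "\<dots> = ?R * ennreal (2 * pi)"
    by (simp add: emeasure_M0_space mult.commute)
  finally have "?L = ennreal (1 / (2 * pi)) * (?R * ennreal (2 * pi))" .
  also have "\<dots> = ?R * (ennreal (1 / (2 * pi)) * ennreal (2 * pi))" by (simp add: ac_simps)
  also have "ennreal (1 / (2 * pi)) * ennreal (2 * pi) = 1"
    by (subst ennreal_mult[symmetric]) auto
  finally show ?thesis by simp
qed

lemma factor_eq: "cmod (1 - z * cis (-a)) = cmod (z - cis a)"
proof -
  have "1 - z * cis (-a) = cis (-a) * (cis a - z)"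
    by (simp add: algebra_simps cis_mult)
  then show ?thesis by (simp add: norm_mult norm_minus_commute)
qed

lemma cmod_charpoly: "cmod (charpoly_X N \<theta> z) = (\<Prod>j<N. cmod (z - cis (\<theta> j)))"
  unfolding charpoly_X_def by (simp add: prod_norm[symmetric] factor_eq)

lemma cmod_q: "cmod (q_poly N \<theta> z) = cmod (charpoly_X N \<theta> z) / cmod (charpoly_X N \<theta> 1)"
  unfolding q_poly_def cmod_charpoly
  by (simp add: prod_norm[symmetric] norm_divide prod_dividef)

lemma cj_eq: "cj_weight \<beta> d N \<theta> = cbe_weight \<beta> N \<theta> * cmod (charpoly_X N \<theta> 1) powr (2 * d)"
  unfolding cj_weight_def cmod_charpoly by (simp add: prod_powr_distrib)

lemma Ir_eq: "Ir N s \<theta> = 1 / (2 * pi) * (LBINT t=-pi..pi. cmod (charpoly_X N \<theta> (cis t)) powr (2 * s))"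
  using LBINT_eq_Ie[of N s \<theta>] by (simp add: Ir_def Aa_def)

lemma Ir_q:
  assumes x: "cmod (charpoly_X N \<theta> 1) > 0"
  shows "Ir N s \<theta> = cmod (charpoly_X N \<theta> 1) powr (2 * s) *
     (1 / (2 * pi) * (LBINT t=-pi..pi. cmod (q_poly N \<theta> (cis t)) powr (2 * s)))"
proof -
  let ?x = "cmod (charpoly_X N \<theta> 1)"
  have "\<And>t. cmod (charpoly_X N \<theta> (cis t)) powr (2 * s) = ?x powr (2 * s) * cmod (q_poly N \<theta> (cis t)) powr (2 * s)"
  proof -
    fix t
    have "cmod (charpoly_X N \<theta> (cis t)) = ?x * cmod (q_poly N \<theta> (cis t))"
      using x by (simp add: cmod_q)
    then show "cmod (charpoly_X N \<theta> (cis t)) powr (2 * s) = ?x powr (2 * s) * cmod (q_poly N \<theta> (cis t)) powr (2 * s)"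
      by (simp add: powr_mult)
  qed
  then show ?thesis unfolding Ir_eq by simp
qed

lemma pointwise_final:
  fixes w x I J s k :: real
  assumes w: "w \<ge> 0" and J: "x > 0 \<Longrightarrow> I = x powr (2 * s) * J" and x: "x \<ge> 0"
  shows "J powr (k - 1) * (w * x powr (2 * (k * s))) = x powr (2 * s) * (I powr (k - 1) * w)"
proof (cases "x = 0")
  case True then show ?thesis by simp
next
  case False
  then have xp: "x > 0" using x by simp
  have e1: "I powr (k - 1) = (x powr (2 * s)) powr (k - 1) * J powr (k - 1)"
    using J[OF xp] by (simp add: powr_mult)
  have e2: "(x powr (2 * s)) powr (k - 1) = x powr (2 * s * (k - 1))" by (simp add: powr_powr)
  have e3: "x powr (2 * s) * x powr (2 * s * (k - 1)) = x powr (2 * (k * s))"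
    by (simp add: powr_add[symmetric] algebra_simps)
  have "x powr (2 * s) * (I powr (k - 1) * w) = (x powr (2 * s) * x powr (2 * s * (k - 1))) * J powr (k - 1) * w"
    unfolding e1 e2 by (simp add: ac_simps)
  also have "\<dots> = J powr (k - 1) * (w * x powr (2 * (k * s)))"
    unfolding e3 by (simp add: ac_simps)
  finally show ?thesis by (rule sym)
qed

lemma cis_diff_le: "cmod (cis a - cis b) \<le> 2"
proof -
  have "cmod (cis a - cis b) \<le> cmod (cis a) + cmod (cis b)" by (rule norm_triangle_ineq4)
  then show ?thesis by simp
qed

lemma one_cis_le: "cmod (1 - cis b) \<le> 2"
  using cis_diff_le[of 0 b] by simp

lemma cj_bound:
  assumes "\<beta> \<ge> 0" "d \<ge> 0"
  shows "cj_weight \<beta> d N \<theta> \<le> (2 powr \<beta>) ^ card {(j,k). j < k \<and> k < N} * (2 powr (2 * d)) ^ N"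
proof -
  have "cbe_weight \<beta> N \<theta> \<le> (\<Prod>p\<in>{(j,k). j < k \<and> k < N}. 2 powr \<beta>)"
    unfolding cbe_weight_def
    by (intro prod_mono conjI powr_mono2 cis_diff_le) (use assms in auto)
  moreover have "(\<Prod>j<N. cmod (1 - cis (\<theta> j)) powr (2 * d)) \<le> (\<Prod>j<N. 2 powr (2 * d))"
    by (intro prod_mono conjI powr_mono2 one_cis_le) (use assms in auto)
  ultimately show ?thesis unfolding cj_weight_def
    by (intro mult_mono) (auto intro!: prod_nonneg simp: cbe_nonneg)
qed

lemma emeasure_box_space: "emeasure (box_space N) (space (box_space N)) = ennreal (2 * pi) ^ N"
proof -
  have "space (box_space N) = Pi\<^sub>E {..<N} (\<lambda>_. space M0)"
    by (simp add: box_space_M0 space_PiM)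
  then have "emeasure (box_space N) (space (box_space N)) = (\<Prod>i\<in>{..<N}. emeasure M0 (space M0))"
    unfolding box_space_M0 by (simp add: PS.emeasure_PiM)
  then show ?thesis by (simp add: emeasure_M0_space)
qed

lemma Zcj_finite:
  assumes "\<beta> \<ge> 0" "d \<ge> 0"
  shows "(\<integral>\<^sup>+\<theta>. ennreal (cj_weight \<beta> d N \<theta>) \<partial>box_space N) < \<infinity>"
proof -
  let ?C = "(2 powr \<beta>) ^ card {(j,k). j < k \<and> k < N} * (2 powr (2 * d)) ^ N"
  have "(\<integral>\<^sup>+\<theta>. ennreal (cj_weight \<beta> d N \<theta>) \<partial>box_space N) \<le> (\<integral>\<^sup>+\<theta>. ennreal ?C \<partial>box_space N)"
    by (intro nn_integral_mono ennreal_leI cj_bound assms)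
  also have "\<dots> = ennreal ?C * ennreal (2 * pi) ^ N"
    by (simp add: emeasure_box_space)
  also have "\<dots> = ennreal ?C * ennreal ((2 * pi) ^ N)"
    by (subst ennreal_power) simp_all
  also have "\<dots> < \<infinity>" by (simp add: ennreal_mult_less_top)
  finally show ?thesis .
qed

lemma sets_M0_Ico: "a \<ge> -pi \<Longrightarrow> b \<le> pi \<Longrightarrow> {a..<b} \<in> sets M0"
  by (auto simp: sets_M0_iff)

lemma emeasure_M0_Ico: "a \<ge> -pi \<Longrightarrow> b \<le> pi \<Longrightarrow> a \<le> b \<Longrightarrow> emeasure M0 {a..<b} = ennreal (b - a)"
  unfolding M0_def by (subst emeasure_restrict_space) auto

lemma cj_pos:
  assumes th: "\<And>j. j < N \<Longrightarrow> 0 < \<theta> j \<and> \<theta> j < pi"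
    and mono: "\<And>j k. j < k \<Longrightarrow> k < N \<Longrightarrow> \<theta> j < \<theta> k"
  shows "cj_weight \<beta> d N \<theta> > 0"
proof -
  have "cbe_weight \<beta> N \<theta> > 0"
    unfolding cbe_weight_def
  proof (intro prod_pos)
    fix p assume "p \<in> {(j, k). j < k \<and> k < N}"
    then obtain j k where p: "p = (j, k)" "j < k" "k < N" by auto
    have ne: "cis (\<theta> j) \<noteq> cis (\<theta> k)"
    proof
      assume "cis (\<theta> j) = cis (\<theta> k)"
      then have "Re (cis (\<theta> j)) = Re (cis (\<theta> k))" by simp
      then have c: "cos (\<theta> j) = cos (\<theta> k)" by simp
      have "j < N" using p by linarith
      then have tj: "0 < \<theta> j \<and> \<theta> j < pi" by (rule th)
      have tk: "0 < \<theta> k \<and> \<theta> k < pi" using p(3) by (rule th)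
      have "\<theta> j = \<theta> k" by (rule cos_inj_pi[OF _ _ _ _ c]) (use tj tk in linarith)+
      with mono[OF p(2,3)] show False by linarith
    qed
    then have "cis (\<theta> j) - cis (\<theta> k) \<noteq> 0" by (simp only: right_minus_eq not_False_eq_True)
    then have "cmod (cis (\<theta> j) - cis (\<theta> k)) \<noteq> 0" by (simp only: norm_eq_zero not_False_eq_True)
    then show "0 < cmod (cis (\<theta> (fst p)) - cis (\<theta> (snd p))) powr \<beta>"
      unfolding p(1) fst_conv snd_conv by (rule iffD2[OF powr_gt_zero])
  qed
  moreover have "(\<Prod>j<N. cmod (1 - cis (\<theta> j)) powr (2 * d)) > 0"
  proof (intro prod_pos)
    fix j assume "j \<in> {..<N}"
    then have "j < N" by simp
    then have tj: "0 < \<theta> j \<and> \<theta> j < pi" by (rule th)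
    then have "sin (\<theta> j) > 0" by (intro sin_gt_zero) (use tj in linarith)+
    have "cis (\<theta> j) \<noteq> 1"
    proof
      assume "cis (\<theta> j) = 1"
      then have "Im (cis (\<theta> j)) = 0" by simp
      then have "sin (\<theta> j) = 0" by simp
      with \<open>sin (\<theta> j) > 0\<close> show False by linarith
    qed
    then have "1 - cis (\<theta> j) \<noteq> 0" by (metis right_minus_eq)
    then have "cmod (1 - cis (\<theta> j)) \<noteq> 0" by (simp only: norm_eq_zero not_False_eq_True)
    then show "0 < cmod (1 - cis (\<theta> j)) powr (2 * d)" by (rule iffD2[OF powr_gt_zero])
  qed
  ultimately show ?thesis unfolding cj_weight_def by (rule mult_pos_pos)
qed

lemma Zcj_nonzero:
  "(\<integral>\<^sup>+\<theta>. ennreal (cj_weight \<beta> d N \<theta>) \<partial>box_space N) \<noteq> 0"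
proof
  define h where "h = pi / (2 * real N + 2)"
  have hpos: "h > 0" unfolding h_def by simp
  define Bx where "Bx = Pi\<^sub>E {..<N} (\<lambda>j. {(2 * real j + 1) * h..<(2 * real j + 2) * h})"
  have bnd: "(2 * real j + 2) * h \<le> pi" if "j < N" for j
  proof -
    have "(2 * real j + 2) \<le> 2 * real N + 2" using that by simp
    then have "(2 * real j + 2) * h \<le> (2 * real N + 2) * h" using hpos by (intro mult_right_mono) auto
    also have "\<dots> = pi" unfolding h_def by simp
    finally show ?thesis .
  qed
  have bnd': "(2 * real j + 2) * h < pi" if "j < N" for j
  proof -
    have "(2 * real j + 2) < 2 * real N + 2" using that by simp
    then have "(2 * real j + 2) * h < (2 * real N + 2) * h" using hpos by (intro mult_strict_right_mono) auto
    also have "\<dots> = pi" unfolding h_def by simp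
    finally show ?thesis .
  qed
  have lo: "-pi \<le> (2 * real j + 1) * h" for j using hpos pi_gt_zero
    by (smt (verit) mult_nonneg_nonneg of_nat_0_le_iff)
  have Bx_sets: "Bx \<in> sets (box_space N)"
    unfolding Bx_def box_space_M0
    by (intro sets_PiM_I_finite sets_M0_Ico lo) (auto intro: bnd)
  have "emeasure (box_space N) Bx = (\<Prod>j<N. emeasure M0 {(2 * real j + 1) * h..<(2 * real j + 2) * h})"
    unfolding Bx_def box_space_M0
    by (intro PS.emeasure_PiM sets_M0_Ico lo) (auto intro: bnd)
  also have "\<dots> = (\<Prod>j<N. ennreal h)"
  proof (intro prod.cong refl)
    fix j assume "j \<in> {..<N}"
    then have j: "j < N" by simp
    have "emeasure M0 {(2 * real j + 1) * h..<(2 * real j + 2) * h} = ennreal ((2 * real j + 2) * h - (2 * real j + 1) * h)"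
      using hpos by (intro emeasure_M0_Ico lo bnd j) (simp add: algebra_simps)
    also have "(2 * real j + 2) * h - (2 * real j + 1) * h = h" by (simp add: algebra_simps)
    finally show "emeasure M0 {(2 * real j + 1) * h..<(2 * real j + 2) * h} = ennreal h" .
  qed
  finally have mB: "emeasure (box_space N) Bx \<noteq> 0" using hpos by simp
  assume "(\<integral>\<^sup>+\<theta>. ennreal (cj_weight \<beta> d N \<theta>) \<partial>box_space N) = 0"
  then have "AE \<theta> in box_space N. ennreal (cj_weight \<beta> d N \<theta>) = 0"
    by (subst (asm) nn_integral_0_iff_AE) auto
  then have "AE \<theta> in box_space N. \<theta> \<notin> Bx"
  proof (rule eventually_mono, goal_cases)
    case (1 \<theta>)
    then have z: "ennreal (cj_weight \<beta> d N \<theta>) = 0" by simp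
    show ?case
    proof
      assume "\<theta> \<in> Bx"
      then have m: "\<And>j. j < N \<Longrightarrow> (2 * real j + 1) * h \<le> \<theta> j \<and> \<theta> j < (2 * real j + 2) * h"
        unfolding Bx_def by (auto simp: PiE_iff)
      have "cj_weight \<beta> d N \<theta> > 0"
      proof (rule cj_pos)
        fix j assume j: "j < N"
        have "0 < (2 * real j + 1) * h" using hpos by simp
        then show "0 < \<theta> j \<and> \<theta> j < pi" using m[OF j] bnd'[OF j] by linarith
      next
        fix j k assume jk: "j < k" "k < N"
        have "(2 * real j + 2) * h \<le> (2 * real k + 1) * h" using jk hpos by (intro mult_right_mono) auto
        moreover have "j < N" using jk by simp
        then have "\<theta> j < (2 * real j + 2) * h" using m by blast
        moreover have "(2 * real k + 1) * h \<le> \<theta> k" using m jk(2) by blast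
        ultimately show "\<theta> j < \<theta> k" by linarith
      qed
      moreover have "cj_weight \<beta> d N \<theta> \<le> 0" using z by (simp only: ennreal_eq_0_iff)
      ultimately show False by linarith
    qed
  qed
  then have nB: "Bx \<in> null_sets (box_space N)" by (subst AE_iff_null_sets[OF Bx_sets])
  have "emeasure (box_space N) Bx = 0" using nB by (rule null_setsD1)
  from mB this show False by (rule notE)
qed

lemma ennreal_div_cancel:
  fixes R Z Z' :: ennreal
  assumes "Z' \<noteq> 0" "Z' < \<infinity>"
  shows "R / Z = Z' / Z * (R / Z')"
proof -
  have "Z' / Z * (R / Z') = (R / Z) * (Z' / Z')"
    by (simp add: divide_ennreal_def ac_simps)
  also have "Z' / Z' = 1" using assms by (auto intro: ennreal_divide_self simp: less_top)
  finally show ?thesis by simp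
qed

theorem proposition2p3:
  fixes \<beta> k s :: real and N :: nat
  assumes "\<beta> > 0" and "k \<ge> 0" and "s \<ge> 0"
  shows "moments_M \<beta> N k s =
    ens_expect N (cbe_weight \<beta> N) (\<lambda>\<theta>. cmod (charpoly_X N \<theta> 1) powr (2 * k * s)) *
    ens_expect N (cj_weight \<beta> (k * s) N)
      (\<lambda>\<theta>. (1 / (2 * pi) * (LBINT t=-pi..pi. cmod (q_poly N \<theta> (cis t)) powr (2 * s))) powr (k - 1))"
proof -
  let ?P = "box_space N"
  let ?w = "cbe_weight \<beta> N"
  let ?x = "\<lambda>\<theta>. cmod (charpoly_X N \<theta> 1)"
  let ?J = "\<lambda>\<theta>. 1 / (2 * pi) * (LBINT t=-pi..pi. cmod (q_poly N \<theta> (cis t)) powr (2 * s))"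
  let ?Z = "\<integral>\<^sup>+\<theta>. ennreal (?w \<theta>) \<partial>?P"
  let ?Z' = "\<integral>\<^sup>+\<theta>. ennreal (cj_weight \<beta> (k * s) N \<theta>) \<partial>?P"
  let ?R = "\<integral>\<^sup>+\<theta>. ennreal (?x \<theta> powr (2 * s)) * ennreal (Fw \<beta> N k s \<theta>) \<partial>?P"
  have M: "moments_M \<beta> N k s = ?R / ?Z"
  proof -
    have "moments_M \<beta> N k s = (\<integral>\<^sup>+\<theta>. ennreal (Ir N s \<theta> powr k) * ennreal (?w \<theta>) \<partial>?P) / ?Z"
      unfolding moments_M_def ens_expect_def Ir_eq by simp
    then show ?thesis using main_identity[OF assms(3), of N k \<beta>] by simp
  qed
  have E1: "ens_expect N ?w (\<lambda>\<theta>. ?x \<theta> powr (2 * k * s)) = ?Z' / ?Z"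
    unfolding ens_expect_def
  proof (intro arg_cong2[where f = "(/)"] refl nn_integral_cong)
    fix \<theta>
    show "ennreal (?x \<theta> powr (2 * k * s)) * ennreal (?w \<theta>) = ennreal (cj_weight \<beta> (k * s) N \<theta>)"
    proof -
      have ex: "2 * k * s = 2 * (k * s)" by simp
      show ?thesis
        unfolding cj_eq ex by (simp add: ennreal_mult[symmetric] cbe_nonneg mult.commute)
    qed
  qed
  have E2: "ens_expect N (cj_weight \<beta> (k * s) N) (\<lambda>\<theta>. ?J \<theta> powr (k - 1)) = ?R / ?Z'"
    unfolding ens_expect_def
  proof (intro arg_cong2[where f = "(/)"] refl nn_integral_cong)
    fix \<theta>
    have "?J \<theta> powr (k - 1) * (?w \<theta> * ?x \<theta> powr (2 * (k * s))) = ?x \<theta> powr (2 * s) * (Ir N s \<theta> powr (k - 1) * ?w \<theta>)"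
      by (rule pointwise_final) (auto simp: cbe_nonneg Ir_q)
    then show "ennreal (?J \<theta> powr (k - 1)) * ennreal (cj_weight \<beta> (k * s) N \<theta>) = ennreal (?x \<theta> powr (2 * s)) * ennreal (Fw \<beta> N k s \<theta>)"
      unfolding cj_eq Fw_def
      by (simp add: ennreal_mult[symmetric] cbe_nonneg)
  qed
  have fin: "?Z' < \<infinity>" using assms by (intro Zcj_finite) auto
  have nz: "?Z' \<noteq> 0" by (rule Zcj_nonzero)
  show ?thesis unfolding M E1 E2 by (rule ennreal_div_cancel[OF nz fin])
qed

end
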